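(* Let $\mathcal M=(\mathcal L+\mathrm{diag}(p_1,\dots,p_n))\otimes I_m$ and suppose Assumptions A1 and A2 hold. Consider the estimator $\dot a_i=-\beta\,\mathrm{sgn}\big(\sum_{j\in\mathcal N_i}w_{ij}(a_i-a_j)+p_i(a_i-a_0)\big)$, $i=1,\dots,n$, with arbitrary initial values $a_i(t_0)\in\mathbb R^m$. Let $\bar a=\mathrm{col}(a_1-a_0,\dots,a_n-a_0)$ and $V_0=\frac12\bar a^T\mathcal M\bar a$. Then $a_i(t)=a_0(t)$ for all $i$ and all $t\ge T_f$, where $$T_f=t_0+\frac{\sqrt{2\lambda_{\max}(\mathcal M)V_0(t_0)}}{\lambda_{\min}(\mathcal M)\big(\beta-\sup_{t\ge t_0}\|\dot a_0(t)\|\big)}.$$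
   Context: Undirected graph on $\{1,\dots,n\}$ with symmetric weights $w_{ij}\ge0$, $w_{ii}=0$, neighbour sets $\mathcal N_i$; pinning weights $p_i\ge0$; Laplacian $\mathcal L$ with $l_{ii}=\sum_jw_{ij}$, $l_{ij}=-w_{ij}$. $a_0:[t_0,\infty)\to\mathbb R^m$ is continuously differentiable (leader acceleration). $\mathrm{sgn}(z)$ is the componentwise sign. Assumption A1: the leader has a directed path to every node (then $\mathcal M$ is symmetric positive definite). Assumption A2: $\sup_{t\ge t_0}\|\dot a_0(t)\|<\beta$, $\beta>0$. $\lambda_{\min},\lambda_{\max}$ denote extreme eigenvalues. *)

theory Defs
  imports "HOL-Analysis.Analysis"
begin

(* Nodes are the elements of a finite type 'n (playing the role of {1..n}),
   the state dimension m is CARD('m); vectors of R^m are real^'m. *)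

definition nbrs :: "('n \<Rightarrow> 'n \<Rightarrow> real) \<Rightarrow> 'n \<Rightarrow> 'n set" where
  "nbrs w i = {j. w i j > 0}"

definition laplacian :: "('n::finite \<Rightarrow> 'n \<Rightarrow> real) \<Rightarrow> 'n \<Rightarrow> 'n \<Rightarrow> real" where
  "laplacian w i j = (if i = j then (\<Sum>k\<in>UNIV. w i k) else - w i j)"

(* M = (L + diag(p)) \<otimes> I_m, indexed by pairs (node, component) *)
definition Mmat :: "('n::finite \<Rightarrow> 'n \<Rightarrow> real) \<Rightarrow> ('n \<Rightarrow> real)
                     \<Rightarrow> real^('n \<times> 'm::finite)^('n \<times> 'm)" where
  "Mmat w p = (\<chi> ik jl. (if snd ik = snd jl
                          then laplacian w (fst ik) (fst jl) + (if fst ik = fst jl then p (fst ik) else 0)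
                          else 0))"

definition eigenvalues :: "real^'k^'k \<Rightarrow> real set" where
  "eigenvalues A = {c. \<exists>v. v \<noteq> 0 \<and> A *v v = c *\<^sub>R v}"

definition lambda_min :: "real^'k^'k \<Rightarrow> real" where
  "lambda_min A = Min (eigenvalues A)"

definition lambda_max :: "real^'k^'k \<Rightarrow> real" where
  "lambda_max A = Max (eigenvalues A)"

(* Assumption A1: the leader (reaching node j directly iff p_j > 0) has a
   (directed) path to every node through edges with positive weight. *)
definition leader_reaches_all :: "('n \<Rightarrow> 'n \<Rightarrow> real) \<Rightarrow> ('n \<Rightarrow> real) \<Rightarrow> bool" where
  "leader_reaches_all w p =
     (\<forall>i. \<exists>j. p j > 0 \<and> (j, i) \<in> {(x, y). w x y > 0}\<^sup>*)"

(* set-valued sign (Filippov regularisation of sgn for a scalar) *)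
definition SGN :: "real \<Rightarrow> real set" where
  "SGN x = (if x = 0 then {-1..1} else {sgn x})"

definition est_arg :: "('n::finite \<Rightarrow> 'n \<Rightarrow> real) \<Rightarrow> ('n \<Rightarrow> real)
                        \<Rightarrow> ('n \<Rightarrow> real^'m) \<Rightarrow> real^'m \<Rightarrow> 'n \<Rightarrow> real^'m" where
  "est_arg w p x x0 i = (\<Sum>j\<in>nbrs w i. w i j *\<^sub>R (x i - x j)) + p i *\<^sub>R (x i - x0)"

(* Solution of  a_i' = - beta sgn(est_arg ...)  on [t0, oo) in the sense of
   differential inclusions (Filippov/Caratheodory): each a_i is absolutely
   continuous, i.e. the integral of a locally integrable v_i, and almost
   everywhere v_i(t) lies in - beta SGN(.) componentwise. *)
definition is_estimator_solution ::
  "('n::finite \<Rightarrow> 'n \<Rightarrow> real) \<Rightarrow> ('n \<Rightarrow> real) \<Rightarrow> real \<Rightarrow> real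
    \<Rightarrow> (real \<Rightarrow> real^'m::finite) \<Rightarrow> ('n \<Rightarrow> real \<Rightarrow> real^'m) \<Rightarrow> bool" where
  "is_estimator_solution w p \<beta> t0 a0 a =
     (\<exists>v :: 'n \<Rightarrow> real \<Rightarrow> real^'m. \<exists>N. negligible N \<and>
        (\<forall>i t. t \<ge> t0 \<longrightarrow> v i integrable_on {t0..t} \<and>
                a i t = a i t0 + integral {t0..t} (v i)) \<and>
        (\<forall>t \<in> {t0..} - N. \<forall>i k.
           v i t $ k \<in> (\<lambda>s. - \<beta> * s) ` SGN (est_arg w p (\<lambda>j. a j t) (a0 t) i $ k)))"

definition abar :: "('n::finite \<Rightarrow> real \<Rightarrow> real^'m::finite) \<Rightarrow> (real \<Rightarrow> real^'m) \<Rightarrow> real \<Rightarrow> real^('n \<times> 'm)" where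
  "abar a a0 t = (\<chi> ik. (a (fst ik) t - a0 t) $ snd ik)"

definition Vfun :: "('n::finite \<Rightarrow> 'n \<Rightarrow> real) \<Rightarrow> ('n \<Rightarrow> real)
                     \<Rightarrow> ('n \<Rightarrow> real \<Rightarrow> real^'m::finite) \<Rightarrow> (real \<Rightarrow> real^'m) \<Rightarrow> real \<Rightarrow> real" where
  "Vfun w p a a0 t = 1/2 * (abar a a0 t \<bullet> (Mmat w p *v abar a a0 t))"

end

theory Submission
  imports Defs
begin

definition symm :: "real^'k^'k \<Rightarrow> bool" where
  "symm A \<longleftrightarrow> (\<forall>i j. A$i$j = A$j$i)"

lemma symm_dot:
  assumes "symm A" shows "(A *v x) \<bullet> y = x \<bullet> (A *v y)"
proof -
  have "(A *v x) \<bullet> y = (\<Sum>i\<in>UNIV. \<Sum>j\<in>UNIV. A$i$j * x$j * y$i)"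
    by (simp add: inner_vec_def matrix_vector_mult_def sum_distrib_right)
  also have "\<dots> = (\<Sum>j\<in>UNIV. \<Sum>i\<in>UNIV. A$i$j * x$j * y$i)" by (rule sum.swap)
  also have "\<dots> = x \<bullet> (A *v y)"
    using assms by (simp add: inner_vec_def matrix_vector_mult_def sum_distrib_left symm_def mult_ac)
  finally show ?thesis .
qed

lemma quad_expand:
  assumes "symm A"
  shows "(x + t *\<^sub>R y) \<bullet> (A *v (x + t *\<^sub>R y)) = x \<bullet> (A *v x) + 2 * t * (y \<bullet> (A *v x)) + t^2 * (y \<bullet> (A *v y))"
proof -
  have s: "x \<bullet> (A *v y) = y \<bullet> (A *v x)"
    using symm_dot[OF assms, of y x] by (simp add: inner_commute)
  show ?thesis
    by (simp add: matrix_vector_right_distrib matrix_vector_mult_scaleR inner_add_left inner_add_right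
         s power2_eq_square algebra_simps)
qed

lemma psd_zero_eigen:
  assumes "symm A" and psd: "\<And>x. x \<bullet> (A *v x) \<ge> 0" and z: "x \<bullet> (A *v x) = 0"
  shows "A *v x = 0"
proof -
  let ?y = "A *v x"
  define b where "b = ?y \<bullet> (A *v x)"
  define d where "d = ?y \<bullet> (A *v ?y)"
  have d0: "d \<ge> 0" unfolding d_def by (rule psd)
  define t where "t = - b / (d + 1)"
  have "0 \<le> (x + t *\<^sub>R ?y) \<bullet> (A *v (x + t *\<^sub>R ?y))" by (rule psd)
  also have "\<dots> = 2 * t * b + t^2 * d" using quad_expand[OF assms(1)] z b_def d_def by simp
  also have "\<dots> = b^2 * (d - 2*(d+1)) / (d+1)^2"
  proof -
    have e: "d + 1 > 0" using d0 by simp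
    have 1: "2 * t * b = - 2 * b^2 * (d+1) / (d+1)^2" using e unfolding t_def by (simp add: power2_eq_square)
    have 2: "t^2 * d = b^2 * d / (d+1)^2" unfolding t_def by (simp add: power_divide)
    show ?thesis unfolding 1 2 by (simp add: add_divide_distrib[symmetric] algebra_simps)
  qed
  finally have "0 \<le> b^2 * (d - 2*(d+1)) / (d+1)^2" .
  moreover have "(d+1)^2 > 0" using d0 by simp
  ultimately have "b^2 * (d - 2*(d+1)) \<ge> 0" by (simp add: zero_le_divide_iff)
  moreover have "d - 2*(d+1) < 0" using d0 by simp
  ultimately have "b^2 \<le> 0" by (simp add: mult_le_0_iff zero_le_mult_iff)
  hence "b = 0" by simp
  thus ?thesis unfolding b_def by simp
qed

definition shiftm :: "real^'k^'k \<Rightarrow> real \<Rightarrow> real^'k^'k" where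
  "shiftm A c = (\<chi> i j. A$i$j - (if i = j then c else 0))"

lemma shiftm_mult: "shiftm A c *v x = A *v x - c *\<^sub>R x"
  by (simp add: vec_eq_iff shiftm_def matrix_vector_mult_def left_diff_distrib sum_subtractf
      if_distrib[of "\<lambda>z. z * _"] cong: if_cong)

lemma shiftm_symm: "symm A \<Longrightarrow> symm (shiftm A c)"
  by (auto simp: symm_def shiftm_def)

lemma rayleigh_min:
  fixes A :: "real^'k^'k"
  assumes "symm A"
  shows "\<exists>x0. norm x0 = 1 \<and> A *v x0 = (x0 \<bullet> (A *v x0)) *\<^sub>R x0 \<and>
            (\<forall>x. (x0 \<bullet> (A *v x0)) * (x \<bullet> x) \<le> x \<bullet> (A *v x))"
proof -
  let ?f = "\<lambda>x::real^'k. x \<bullet> (A *v x)"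
  have cont: "continuous_on (sphere 0 1) ?f"
    by (intro continuous_intros linear_continuous_on matrix_vector_mul_bounded_linear)
  have ne: "sphere (0::real^'k) 1 \<noteq> {}" by simp
  obtain x0 where x0: "x0 \<in> sphere 0 1" and min: "\<And>y. y \<in> sphere 0 1 \<Longrightarrow> ?f x0 \<le> ?f y"
    using continuous_attains_inf[OF compact_sphere ne cont] by blast
  define \<nu> where "\<nu> = ?f x0"
  have n1: "norm x0 = 1" using x0 by simp
  have ge: "\<nu> * (x \<bullet> x) \<le> ?f x" for x
  proof (cases "x = 0")
    case True then show ?thesis by simp
  next
    case False
    define y where "y = (1 / norm x) *\<^sub>R x"
    have "y \<in> sphere 0 1" using False unfolding y_def by simp
    hence "\<nu> \<le> ?f y" using min unfolding \<nu>_def by blast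
    also have "?f y = (1 / norm x)^2 * ?f x"
      unfolding y_def by (simp add: matrix_vector_mult_scaleR power2_eq_square)
    finally have "\<nu> * (norm x)^2 \<le> ?f x" using False by (simp add: field_simps)
    thus ?thesis by (simp add: power2_norm_eq_inner)
  qed
  have psd: "x \<bullet> (shiftm A \<nu> *v x) \<ge> 0" for x
    using ge[of x] by (simp add: shiftm_mult inner_diff_right)
  have z: "x0 \<bullet> (shiftm A \<nu> *v x0) = 0"
    using n1 by (simp add: shiftm_mult inner_diff_right \<nu>_def power2_norm_eq_inner[symmetric])
  have "shiftm A \<nu> *v x0 = 0" by (rule psd_zero_eigen[OF shiftm_symm[OF assms] psd z])
  hence "A *v x0 = \<nu> *\<^sub>R x0" by (simp add: shiftm_mult)
  thus ?thesis using n1 ge unfolding \<nu>_def by blast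
qed

lemma eig_finite:
  fixes A :: "real^'k^'k"
  assumes "symm A" shows "finite (eigenvalues A)"
proof -
  let ?E = "eigenvalues A"
  define ev where "ev c = (SOME v. v \<noteq> 0 \<and> A *v v = c *\<^sub>R v)" for c
  have ev: "ev c \<noteq> 0 \<and> A *v ev c = c *\<^sub>R ev c" if "c \<in> ?E" for c
  proof -
    have "\<exists>v. v \<noteq> 0 \<and> A *v v = c *\<^sub>R v" using that by (simp add: eigenvalues_def)
    thus ?thesis unfolding ev_def by (rule someI_ex)
  qed
  have inj: "inj_on ev ?E"
  proof (rule inj_onI)
    fix c d assume c: "c \<in> ?E" and d: "d \<in> ?E" and e: "ev c = ev d"
    have "c *\<^sub>R ev c = d *\<^sub>R ev c" using ev[OF c] ev[OF d] e by metis
    thus "c = d" using ev[OF c] by (simp add: scaleR_cancel_right)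
  qed
  have orth: "pairwise orthogonal (ev ` ?E)"
  proof (clarsimp simp: pairwise_def orthogonal_def)
    fix c d assume c: "c \<in> ?E" and d: "d \<in> ?E" and ne: "ev c \<noteq> ev d"
    have cd: "c \<noteq> d" using ne by auto
    have "c * (ev c \<bullet> ev d) = (A *v ev c) \<bullet> ev d" using ev[OF c] by simp
    also have "\<dots> = ev c \<bullet> (A *v ev d)" by (rule symm_dot[OF assms])
    also have "\<dots> = d * (ev c \<bullet> ev d)" using ev[OF d] by simp
    finally show "ev c \<bullet> ev d = 0" using cd by simp
  qed
  have "0 \<notin> ev ` ?E" using ev by auto
  hence "independent (ev ` ?E)" using pairwise_orthogonal_independent orth by blast
  hence "finite (ev ` ?E)" by (rule independent_imp_finite)
  thus ?thesis using finite_imageD inj by blast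
qed

lemma symm_neg: "symm A \<Longrightarrow> symm (-A)" by (simp add: symm_def)

lemma lambda_facts:
  fixes A :: "real^'k^'k"
  assumes "symm A"
  shows "\<And>x. lambda_min A * (x \<bullet> x) \<le> x \<bullet> (A *v x)"
    and "\<And>x. x \<bullet> (A *v x) \<le> lambda_max A * (x \<bullet> x)"
    and "\<exists>x0. norm x0 = 1 \<and> x0 \<bullet> (A *v x0) = lambda_min A"
    and "lambda_min A \<le> lambda_max A"
proof -
  obtain x0 where n0: "norm x0 = 1" and e0: "A *v x0 = (x0 \<bullet> (A *v x0)) *\<^sub>R x0"
     and g0: "\<forall>x. (x0 \<bullet> (A *v x0)) * (x \<bullet> x) \<le> x \<bullet> (A *v x)"
    using rayleigh_min[OF assms] by blast
  obtain x1 where n1: "norm x1 = 1" and e1: "(-A) *v x1 = (x1 \<bullet> ((-A) *v x1)) *\<^sub>R x1"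
     and g1: "\<forall>x. (x1 \<bullet> ((-A) *v x1)) * (x \<bullet> x) \<le> x \<bullet> ((-A) *v x)"
    using rayleigh_min[OF symm_neg[OF assms]] by blast
  have neg: "(-A) *v x = - (A *v x)" for x :: "real^'k"
    by (simp add: vec_eq_iff matrix_vector_mult_def sum_negf)
  define \<nu> where "\<nu> = x0 \<bullet> (A *v x0)"
  define \<mu> where "\<mu> = x1 \<bullet> (A *v x1)"
  have "-(A *v x1) = - (\<mu> *\<^sub>R x1)" using e1 unfolding neg \<mu>_def by simp
  hence E1: "A *v x1 = \<mu> *\<^sub>R x1" by simp
  have G1: "x \<bullet> (A *v x) \<le> \<mu> * (x \<bullet> x)" for x using g1[rule_format, of x] unfolding neg \<mu>_def by simp
  have G0: "\<nu> * (x \<bullet> x) \<le> x \<bullet> (A *v x)" for x using g0 unfolding \<nu>_def by blast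
  have x0ne: "x0 \<noteq> 0" "x1 \<noteq> 0" using n0 n1 by auto
  have nuE: "\<nu> \<in> eigenvalues A" unfolding eigenvalues_def mem_Collect_eq
    by (rule exI[of _ x0]) (use e0 x0ne in \<open>simp add: \<nu>_def\<close>)
  have muE: "\<mu> \<in> eigenvalues A" unfolding eigenvalues_def mem_Collect_eq
    by (rule exI[of _ x1]) (use E1 x0ne in simp)
  have bnd: "\<nu> \<le> c \<and> c \<le> \<mu>" if "c \<in> eigenvalues A" for c
  proof -
    have "\<exists>v. v \<noteq> 0 \<and> A *v v = c *\<^sub>R v" using that by (simp add: eigenvalues_def)
    then obtain v where vv: "v \<noteq> 0 \<and> A *v v = c *\<^sub>R v" ..
    have v: "v \<noteq> 0" "A *v v = c *\<^sub>R v" using vv by simp_all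
    have q: "v \<bullet> (A *v v) = c * (v \<bullet> v)" using v by simp
    have pos: "v \<bullet> v > 0" using v by simp
    have a: "\<nu> * (v \<bullet> v) \<le> c * (v \<bullet> v)" using G0[of v] unfolding q .
    have b: "c * (v \<bullet> v) \<le> \<mu> * (v \<bullet> v)" using G1[of v] unfolding q .
    show ?thesis using a b pos by (meson mult_le_cancel_right_pos)
  qed
  have fin: "finite (eigenvalues A)" by (rule eig_finite[OF assms])
  have lmin: "lambda_min A = \<nu>" unfolding lambda_min_def using fin nuE bnd by (intro Min_eqI) auto
  have lmax: "lambda_max A = \<mu>" unfolding lambda_max_def using fin muE bnd by (intro Max_eqI) auto
  show "\<And>x. lambda_min A * (x \<bullet> x) \<le> x \<bullet> (A *v x)" using G0 lmin by simp
  show "\<And>x. x \<bullet> (A *v x) \<le> lambda_max A * (x \<bullet> x)" using G1 lmax by simp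
  show "\<exists>x0. norm x0 = 1 \<and> x0 \<bullet> (A *v x0) = lambda_min A" using n0 lmin \<nu>_def by (intro exI[of _ x0]) simp
  show "lambda_min A \<le> lambda_max A" using lmin lmax bnd nuE by simp
qed


lemma pair_sum: "(\<Sum>z\<in>(UNIV::('a::finite\<times>'b::finite) set). f z) = (\<Sum>i\<in>UNIV. \<Sum>k\<in>UNIV. f (i,k))"
  by (simp add: sum.cartesian_product)

lemma Mmat_mult:
  fixes w :: "'n::finite \<Rightarrow> 'n \<Rightarrow> real" and x :: "real^('n\<times>'m::finite)"
  assumes w_diag: "\<And>i. w i i = 0"
  shows "(Mmat w p *v x) $ (i,k) = (\<Sum>j\<in>UNIV. w i j * (x$(i,k) - x$(j,k))) + p i * x$(i,k)"
proof -
  have "(Mmat w p *v x) $ (i,k) = (\<Sum>j\<in>UNIV. \<Sum>l\<in>UNIV. (if k = l then laplacian w i j + (if i = j then p i else 0) else 0) * x$(j,l))"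
    unfolding matrix_vector_mult_def Mmat_def pair_sum by (simp only: vec_lambda_beta fst_conv snd_conv)
  also have "\<dots> = (\<Sum>j\<in>UNIV. (laplacian w i j + (if i = j then p i else 0)) * x$(j,k))"
    by (simp add: if_distrib[of "\<lambda>z. z * _"] cong: if_cong)
  also have "\<dots> = (\<Sum>j\<in>UNIV. (if j = i then (\<Sum>l\<in>UNIV. w i l) * x$(i,k) + p i * x$(i,k) else 0) - w i j * x$(j,k))"
    by (intro sum.cong) (auto simp: laplacian_def w_diag algebra_simps)
  also have "\<dots> = (\<Sum>l\<in>UNIV. w i l) * x$(i,k) + p i * x$(i,k) - (\<Sum>j\<in>UNIV. w i j * x$(j,k))"
    by (simp add: sum_subtractf)
  also have "\<dots> = (\<Sum>j\<in>UNIV. w i j * (x$(i,k) - x$(j,k))) + p i * x$(i,k)"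
    by (simp add: right_diff_distrib sum_subtractf sum_distrib_right)
  finally show ?thesis .
qed

lemma Mmat_symm:
  assumes w_sym: "\<And>i j. w i j = w j i"
  shows "symm (Mmat w p :: real^('n::finite\<times>'m::finite)^('n\<times>'m))"
  unfolding symm_def Mmat_def laplacian_def using w_sym by auto

lemma est_arg_eq:
  fixes w :: "'n::finite \<Rightarrow> 'n \<Rightarrow> real" and a :: "'n \<Rightarrow> real \<Rightarrow> real^'m::finite"
  assumes w_diag: "\<And>i. w i i = 0" and w_nonneg: "\<And>i j. w i j \<ge> 0"
  shows "(Mmat w p *v abar a a0 t) $ (i,k) = est_arg w p (\<lambda>j. a j t) (a0 t) i $ k"
proof -
  have "(\<Sum>j\<in>nbrs w i. w i j *\<^sub>R (a i t - a j t)) = (\<Sum>j\<in>UNIV. w i j *\<^sub>R (a i t - a j t))"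
  proof (rule sum.mono_neutral_left)
    show "\<forall>j\<in>UNIV - nbrs w i. w i j *\<^sub>R (a i t - a j t) = 0"
      using w_nonneg by (auto simp: nbrs_def less_le)
  qed auto
  thus ?thesis
    by (simp add: Mmat_mult[OF w_diag] est_arg_def abar_def algebra_simps)
qed

lemma dirichlet:
  fixes w :: "'n::finite \<Rightarrow> 'n \<Rightarrow> real" and y :: "'n \<Rightarrow> real"
  assumes w_sym: "\<And>i j. w i j = w j i"
  shows "(\<Sum>i\<in>UNIV. \<Sum>j\<in>UNIV. w i j * (y i - y j) * y i) = (\<Sum>i\<in>UNIV. \<Sum>j\<in>UNIV. w i j * (y i - y j)^2) / 2"
proof -
  let ?S = "(\<Sum>i\<in>UNIV. \<Sum>j\<in>UNIV. w i j * (y i - y j) * y i)"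
  have "?S = (\<Sum>j\<in>UNIV. \<Sum>i\<in>UNIV. w i j * (y i - y j) * y i)" by (rule sum.swap)
  also have "\<dots> = (\<Sum>i\<in>UNIV. \<Sum>j\<in>UNIV. - (w i j * (y i - y j) * y j))"
    by (intro sum.cong refl) (simp add: w_sym algebra_simps)
  finally have S2: "?S = (\<Sum>i\<in>UNIV. \<Sum>j\<in>UNIV. - (w i j * (y i - y j) * y j))" .
  have "2 * ?S = ?S + (\<Sum>i\<in>UNIV. \<Sum>j\<in>UNIV. - (w i j * (y i - y j) * y j))" using S2 by simp
  also have "\<dots> = (\<Sum>i\<in>UNIV. \<Sum>j\<in>UNIV. w i j * (y i - y j)^2)"
    by (simp add: sum.distrib[symmetric] power2_eq_square algebra_simps)
  finally show ?thesis by simp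
qed

lemma Mmat_quad:
  fixes w :: "'n::finite \<Rightarrow> 'n \<Rightarrow> real" and x :: "real^('n\<times>'m::finite)"
  assumes w_diag: "\<And>i. w i i = 0" and w_sym: "\<And>i j. w i j = w j i"
  shows "x \<bullet> (Mmat w p *v x) = (\<Sum>k\<in>UNIV. (\<Sum>i\<in>UNIV. \<Sum>j\<in>UNIV. w i j * (x$(i,k) - x$(j,k))^2) / 2
                                         + (\<Sum>i\<in>UNIV. p i * (x$(i,k))^2))"
proof -
  have "x \<bullet> (Mmat w p *v x) = (\<Sum>i\<in>UNIV. \<Sum>k\<in>UNIV. x$(i,k) * ((\<Sum>j\<in>UNIV. w i j * (x$(i,k) - x$(j,k))) + p i * x$(i,k)))"
    unfolding inner_vec_def pair_sum by (simp add: Mmat_mult[OF w_diag])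
  also have "\<dots> = (\<Sum>k\<in>UNIV. \<Sum>i\<in>UNIV. x$(i,k) * ((\<Sum>j\<in>UNIV. w i j * (x$(i,k) - x$(j,k))) + p i * x$(i,k)))"
    by (rule sum.swap)
  also have "\<dots> = (\<Sum>k\<in>UNIV. (\<Sum>i\<in>UNIV. \<Sum>j\<in>UNIV. w i j * (x$(i,k) - x$(j,k)) * x$(i,k)) + (\<Sum>i\<in>UNIV. p i * (x$(i,k))^2))"
    by (simp add: sum.distrib distrib_left sum_distrib_left power2_eq_square mult_ac)
  also have "\<dots> = (\<Sum>k\<in>UNIV. (\<Sum>i\<in>UNIV. \<Sum>j\<in>UNIV. w i j * (x$(i,k) - x$(j,k))^2) / 2
                                         + (\<Sum>i\<in>UNIV. p i * (x$(i,k))^2))"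
    by (intro sum.cong refl) (simp add: dirichlet[of w, OF w_sym])
  finally show ?thesis .
qed

lemma Mmat_pd:
  fixes w :: "'n::finite \<Rightarrow> 'n \<Rightarrow> real" and x :: "real^('n\<times>'m::finite)"
  assumes w_diag: "\<And>i. w i i = 0" and w_sym: "\<And>i j. w i j = w j i"
    and w_nonneg: "\<And>i j. w i j \<ge> 0" and p_nonneg: "\<And>i. p i \<ge> 0"
    and A1: "leader_reaches_all w p" and x: "x \<noteq> 0"
  shows "x \<bullet> (Mmat w p *v x) > 0"
proof (rule ccontr)
  assume "\<not> ?thesis"
  hence le: "x \<bullet> (Mmat w p *v x) \<le> 0" by simp
  let ?Q = "\<lambda>k. (\<Sum>i\<in>UNIV. \<Sum>j\<in>UNIV. w i j * (x$(i,k) - x$(j,k))^2) / 2 + (\<Sum>i\<in>UNIV. p i * (x$(i,k))^2)"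
  have Qnn: "\<And>k. ?Q k \<ge> 0" using w_nonneg p_nonneg by (intro add_nonneg_nonneg divide_nonneg_pos sum_nonneg mult_nonneg_nonneg) auto
  have sq: "(\<Sum>k\<in>UNIV. ?Q k) \<ge> 0" by (rule sum_nonneg) (rule Qnn)
  have "(\<Sum>k\<in>UNIV. ?Q k) = 0" using le sq Mmat_quad[where w=w and x=x and p=p, OF w_diag w_sym] by linarith
  hence Q0: "?Q k = 0" for k using Qnn by (simp add: sum_nonneg_eq_0_iff)
  have AB: "(\<Sum>i\<in>UNIV. \<Sum>j\<in>UNIV. w i j * (x$(i,k) - x$(j,k))^2) = 0 \<and> (\<Sum>i\<in>UNIV. p i * (x$(i,k))^2) = 0" for k
  proof -
    have a: "(\<Sum>i\<in>UNIV. \<Sum>j\<in>UNIV. w i j * (x$(i,k) - x$(j,k))^2) \<ge> 0"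
      using w_nonneg by (intro sum_nonneg mult_nonneg_nonneg) auto
    have b: "(\<Sum>i\<in>UNIV. p i * (x$(i,k))^2) \<ge> 0"
      using p_nonneg by (intro sum_nonneg mult_nonneg_nonneg) auto
    show ?thesis using a b Q0[of k] by linarith
  qed
  have edge: "x$(i,k) = x$(j,k)" if "w i j > 0" for i j k
  proof -
    have A: "(\<Sum>i\<in>UNIV. \<Sum>j\<in>UNIV. w i j * (x$(i,k) - x$(j,k))^2) = 0"
     and B: "(\<Sum>i\<in>UNIV. p i * (x$(i,k))^2) = 0"
      using AB[of k] by auto
    have "(\<Sum>j\<in>UNIV. w i j * (x$(i,k) - x$(j,k))^2) = 0"
      using A w_nonneg by (simp add: sum_nonneg_eq_0_iff sum_nonneg)
    hence "w i j * (x$(i,k) - x$(j,k))^2 = 0"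
      using w_nonneg by (simp add: sum_nonneg_eq_0_iff)
    thus ?thesis using that by simp
  qed
  have leader: "x$(i,k) = 0" if "p i > 0" for i k
  proof -
    have B: "(\<Sum>i\<in>UNIV. p i * (x$(i,k))^2) = 0"
      using AB[of k] by auto
    hence "p i * (x$(i,k))^2 = 0" using p_nonneg by (simp add: sum_nonneg_eq_0_iff)
    thus ?thesis using that by simp
  qed
  have "x$(i,k) = 0" for i k
  proof -
    obtain j where j: "p j > 0" and r: "(j, i) \<in> {(x, y). w x y > 0}\<^sup>*"
      using A1 unfolding leader_reaches_all_def by blast
    from r show ?thesis
    proof (induction rule: rtrancl_induct)
      case base show ?case using leader[OF j] .
    next
      case (step y z) thus ?case using edge[of y z k] by simp
    qed
  qed
  hence "x = 0" by (simp add: vec_eq_iff)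
  thus False using x by simp
qed


lemma int_bound_ae:
  fixes f :: "real \<Rightarrow> real"
  assumes f: "f integrable_on {a..b}" and N: "negligible N" and ab: "a \<le> b"
    and le: "\<And>x. x \<in> {a..b} - N \<Longrightarrow> f x \<le> K"
  shows "integral {a..b} f \<le> K * (b - a)"
proof -
  define g where "g x = (if x \<in> N then K else f x)" for x
  have eq: "integral {a..b} f = integral {a..b} g"
    by (rule integral_spike[OF N]) (simp add: g_def)
  have gi: "g integrable_on {a..b}"
    by (rule integrable_spike[OF f N]) (simp add: g_def)
  have "integral {a..b} g \<le> integral {a..b} (\<lambda>x. K)"
    by (rule integral_le[OF gi]) (auto simp: g_def le)
  also have "\<dots> = K * (b - a)" using ab by simp
  finally show ?thesis using eq by simp
qed

lemma int_abs_bound_ae: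
  fixes f :: "real \<Rightarrow> real"
  assumes f: "f integrable_on {a..b}" and N: "negligible N" and ab: "a \<le> b"
    and le: "\<And>x. x \<in> {a..b} - N \<Longrightarrow> \<bar>f x\<bar> \<le> K"
  shows "\<bar>integral {a..b} f\<bar> \<le> K * (b - a)"
proof -
  have 1: "integral {a..b} f \<le> K * (b - a)"
    by (rule int_bound_ae[OF f N ab]) (use le in force)
  have "integral {a..b} (\<lambda>x. - f x) \<le> K * (b - a)"
    by (rule int_bound_ae[OF integrable_neg[OF f] N ab]) (use le in force)
  hence 2: "- integral {a..b} f \<le> K * (b - a)" by simp
  show ?thesis using 1 2 by linarith
qed

lemma telescope_step:
  fixes f :: "real \<Rightarrow> real"
  assumes step: "\<And>x y. a \<le> x \<Longrightarrow> x \<le> y \<Longrightarrow> y \<le> b \<Longrightarrow> f y - f x \<le> C * (y - x)^2"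
    and h: "h \<ge> 0"
  shows "n \<le> N \<Longrightarrow> a + real N * h \<le> b \<Longrightarrow> f (a + real n * h) - f a \<le> real n * C * h^2"
proof (induction n)
  case 0 then show ?case by simp
next
  case (Suc n)
  have le1: "a + real n * h \<le> a + real (Suc n) * h" using h by (simp add: algebra_simps)
  have le0: "a \<le> a + real n * h" using h by simp
  have "real (Suc n) * h \<le> real N * h" using Suc.prems(1) h by (simp add: mult_right_mono)
  hence le2: "a + real (Suc n) * h \<le> b" using Suc.prems(2) by linarith
  have "f (a + real (Suc n) * h) - f (a + real n * h) \<le> C * (real (Suc n) * h - real n * h)^2"
    using step[OF le0 le1 le2] by simp
  also have "\<dots> = C * h^2" by (simp add: algebra_simps)
  finally have "f (a + real (Suc n) * h) - f (a + real n * h) \<le> C * h^2" .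
  moreover have "f (a + real n * h) - f a \<le> real n * C * h^2" using Suc by simp
  ultimately show ?case by (simp add: algebra_simps)
qed

lemma telescope:
  fixes f :: "real \<Rightarrow> real"
  assumes ab: "a \<le> b" and C: "C \<ge> 0"
    and step: "\<And>x y. a \<le> x \<Longrightarrow> x \<le> y \<Longrightarrow> y \<le> b \<Longrightarrow> f y - f x \<le> C * (y - x)^2"
  shows "f b \<le> f a"
proof (rule ccontr)
  assume "\<not> ?thesis"
  hence d: "f b - f a > 0" by simp
  obtain N :: nat where N: "C * (b - a)^2 / (f b - f a) < real N" using reals_Archimedean2 by blast
  have Npos: "N > 0" using N C d by (metis divide_nonneg_pos of_nat_0_less_iff order_le_less_trans zero_le_power2 mult_nonneg_nonneg)
  define h where "h = (b - a) / real N"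
  have h0: "h \<ge> 0" using ab Npos unfolding h_def by simp
  have hN: "a + real N * h = b" using Npos unfolding h_def by simp
  have "f (a + real N * h) - f a \<le> real N * C * h^2"
    by (rule telescope_step[OF step h0]) (use hN in auto)
  hence "f b - f a \<le> real N * C * h^2" using hN by simp
  also have "\<dots> = C * (b - a)^2 / real N" using Npos unfolding h_def by (simp add: power2_eq_square)
  finally have "f b - f a \<le> C * (b - a)^2 / real N" .
  hence "(f b - f a) * real N \<le> C * (b - a)^2" using Npos by (simp add: le_divide_eq)
  moreover have "C * (b - a)^2 < real N * (f b - f a)" using N d by (simp add: divide_less_eq)
  ultimately show False by (simp add: mult.commute)
qed


lemma core_local:
  fixes M :: "real^'k^'k" and A U :: "real \<Rightarrow> real^'k"
  assumes symM: "symm M"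
    and nu: "\<nu> > 0" and lo: "\<And>x. \<nu> * (x \<bullet> x) \<le> x \<bullet> (M *v x)"
    and c: "c > 0" and N: "negligible N" and B: "B \<ge> 0"
    and int: "\<And>t1 t2 z. t0 \<le> t1 \<Longrightarrow> t1 \<le> t2 \<Longrightarrow> (\<lambda>\<tau>. U \<tau> $ z) integrable_on {t1..t2} \<and>
                 A t2 $ z - A t1 $ z = integral {t1..t2} (\<lambda>\<tau>. U \<tau> $ z)"
    and Ub: "\<And>\<tau> z. \<tau> \<ge> t0 \<Longrightarrow> \<tau> \<notin> N \<Longrightarrow> \<bar>U \<tau> $ z\<bar> \<le> B"
    and Ud: "\<And>\<tau>. \<tau> \<ge> t0 \<Longrightarrow> \<tau> \<notin> N \<Longrightarrow> U \<tau> \<bullet> (M *v A \<tau>) \<le> - c * norm (M *v A \<tau>)"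
  shows "\<exists>K \<ge> 0. \<forall>t1 t2. t0 \<le> t1 \<longrightarrow> t1 \<le> t2 \<longrightarrow>
           1/2 * (A t2 \<bullet> (M *v A t2)) - 1/2 * (A t1 \<bullet> (M *v A t1))
             \<le> - c * \<nu> * (t2 - t1) * norm (A t2) + K * (t2 - t1)^2"
proof -
  define L where "L = real CARD('k) * B"
  have L0: "L \<ge> 0" using B unfolding L_def by simp
  have Lip: "norm (A t - A s) \<le> L * (t - s)" if "t0 \<le> s" "s \<le> t" for s t
  proof -
    have "\<bar>(A t - A s) $ z\<bar> \<le> B * (t - s)" for z
    proof -
      have i: "(\<lambda>\<tau>. U \<tau> $ z) integrable_on {s..t}" and e: "A t $ z - A s $ z = integral {s..t} (\<lambda>\<tau>. U \<tau> $ z)"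
        using int[OF that] by auto
      have "\<bar>integral {s..t} (\<lambda>\<tau>. U \<tau> $ z)\<bar> \<le> B * (t - s)"
        by (rule int_abs_bound_ae[OF i N that(2)]) (use Ub that in auto)
      thus ?thesis using e by simp
    qed
    hence "(\<Sum>z\<in>UNIV. \<bar>(A t - A s) $ z\<bar>) \<le> (\<Sum>z\<in>(UNIV::'k set). B * (t - s))"
      by (intro sum_mono) auto
    also have "\<dots> = L * (t - s)" by (simp add: L_def)
    finally show ?thesis using norm_le_l1_cart[of "A t - A s"] by linarith
  qed
  have Unorm: "norm (U \<tau>) \<le> L" if "\<tau> \<ge> t0" "\<tau> \<notin> N" for \<tau>
  proof -
    have "(\<Sum>z\<in>UNIV. \<bar>U \<tau> $ z\<bar>) \<le> (\<Sum>z\<in>(UNIV::'k set). B)" using Ub[OF that] by (intro sum_mono) auto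
    thus ?thesis using norm_le_l1_cart[of "U \<tau>"] by (simp add: L_def)
  qed
  obtain Mb where Mb: "Mb > 0" "\<And>x. norm (M *v x) \<le> norm x * Mb"
    using bounded_linear.pos_bounded[OF matrix_vector_mul_bounded_linear[of M]] by blast
  have Mlow: "\<nu> * norm x \<le> norm (M *v x)" for x
  proof (cases "x = 0")
    case True then show ?thesis by simp
  next
    case False
    have "\<nu> * (norm x * norm x) \<le> x \<bullet> (M *v x)" using lo[of x] by (simp add: dot_square_norm power2_eq_square)
    also have "\<dots> \<le> norm x * norm (M *v x)" by (rule norm_cauchy_schwarz)
    finally have "(\<nu> * norm x) * norm x \<le> norm (M *v x) * norm x" by (simp add: mult_ac)
    thus ?thesis using False by simp
  qed
  define K where "K = c * \<nu> * L + L * Mb * L"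
  have K0: "K \<ge> 0" unfolding K_def using c nu L0 Mb by simp
  have main: "1/2 * (A t2 \<bullet> (M *v A t2)) - 1/2 * (A t1 \<bullet> (M *v A t1))
             \<le> - c * \<nu> * (t2 - t1) * norm (A t2) + K * (t2 - t1)^2" if t1: "t0 \<le> t1" and t12: "t1 \<le> t2" for t1 t2
  proof -
    define h where "h = t2 - t1"
    define m where "m = (1/2) *\<^sub>R (A t1 + A t2)"
    define y where "y = M *v m"
    have sd: "(M *v A t1) \<bullet> A t2 = A t1 \<bullet> (M *v A t2)" by (rule symm_dot[OF symM])
    have eqV: "1/2 * (A t2 \<bullet> (M *v A t2)) - 1/2 * (A t1 \<bullet> (M *v A t1)) = (A t2 - A t1) \<bullet> y"
      unfolding y_def m_def
      using sd by (simp add: matrix_vector_mult_scaleR matrix_vector_right_distrib inner_diff_left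
            inner_add_right inner_commute[of "A t2" "M *v A t1"] algebra_simps)
    have ii: "(\<lambda>\<tau>. U \<tau> $ z) integrable_on {t1..t2}" for z using int[OF t1 t12] by auto
    have iy: "(\<lambda>\<tau>. U \<tau> \<bullet> y) integrable_on {t1..t2}"
      unfolding inner_vec_def inner_real_def by (intro integrable_sum integrable_on_mult_left ii) simp
    have eqI: "(A t2 - A t1) \<bullet> y = integral {t1..t2} (\<lambda>\<tau>. U \<tau> \<bullet> y)"
    proof -
      have "(A t2 - A t1) \<bullet> y = (\<Sum>z\<in>UNIV. integral {t1..t2} (\<lambda>\<tau>. U \<tau> $ z) * y $ z)"
        unfolding inner_vec_def inner_real_def using int[OF t1 t12] by simp
      also have "\<dots> = (\<Sum>z\<in>UNIV. integral {t1..t2} (\<lambda>\<tau>. U \<tau> $ z * y $ z))"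
        using integral_mult[OF ii] by (simp add: mult.commute)
      also have "\<dots> = integral {t1..t2} (\<lambda>\<tau>. U \<tau> \<bullet> y)"
        unfolding inner_vec_def inner_real_def by (rule integral_sum[symmetric]) (auto intro: integrable_on_mult_left ii)
      finally show ?thesis .
    qed
    have bnd: "U \<tau> \<bullet> y \<le> - c * \<nu> * norm (A t2) + K * h" if \<tau>: "\<tau> \<in> {t1..t2} - N" for \<tau>
    proof -
      have tt: "t0 \<le> \<tau>" "\<tau> \<notin> N" "t1 \<le> \<tau>" "\<tau> \<le> t2" using \<tau> t1 by auto
      have d1: "norm (A \<tau> - A t1) \<le> L * h" using Lip[OF t1 tt(3)] L0 tt(4) unfolding h_def
        by (smt (verit) mult_left_mono)
      have d2: "norm (A t2 - A \<tau>) \<le> L * h" using Lip[OF tt(1) tt(4)] L0 tt(3) unfolding h_def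
        by (smt (verit) mult_left_mono)
      have "m - A \<tau> = (1/2) *\<^sub>R (A t1 - A \<tau>) + (1/2) *\<^sub>R (A t2 - A \<tau>)"
        unfolding m_def by (simp add: vec_eq_iff field_simps)
      hence "norm (m - A \<tau>) \<le> (1/2) * norm (A t1 - A \<tau>) + (1/2) * norm (A t2 - A \<tau>)"
        by (metis norm_scaleR norm_triangle_ineq abs_of_pos half_gt_zero_iff zero_less_one)
      also have "\<dots> \<le> L * h" using d1 d2 by (simp add: norm_minus_commute)
      finally have dm: "norm (m - A \<tau>) \<le> L * h" .
      have sp: "y = M *v A \<tau> + M *v (m - A \<tau>)" unfolding y_def
        by (simp add: matrix_vector_mult_diff_distrib)
      have p1: "U \<tau> \<bullet> (M *v A \<tau>) \<le> - c * \<nu> * norm (A t2) + c * \<nu> * L * h"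
      proof -
        have "norm (A t2) \<le> norm (A \<tau>) + L * h" using d2 norm_triangle_ineq2[of "A t2" "A \<tau>"] by linarith
        hence "(c * \<nu>) * norm (A t2) \<le> (c * \<nu>) * (norm (A \<tau>) + L * h)"
          using c nu by (intro mult_left_mono) auto
        hence "c * \<nu> * norm (A t2) \<le> c * (\<nu> * norm (A \<tau>)) + c * \<nu> * L * h"
          by (simp add: algebra_simps)
        also have "c * (\<nu> * norm (A \<tau>)) \<le> c * norm (M *v A \<tau>)" using Mlow c by (simp add: mult_left_mono)
        finally show ?thesis using Ud[OF tt(1,2)] by linarith
      qed
      have p2: "U \<tau> \<bullet> (M *v (m - A \<tau>)) \<le> L * Mb * L * h"
      proof -
        have "U \<tau> \<bullet> (M *v (m - A \<tau>)) \<le> norm (U \<tau>) * norm (M *v (m - A \<tau>))" by (rule norm_cauchy_schwarz)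
        also have "\<dots> \<le> L * (norm (m - A \<tau>) * Mb)"
          using Unorm[OF tt(1,2)] Mb(2)[of "m - A \<tau>"] L0 by (intro mult_mono) auto
        also have "\<dots> \<le> L * (L * h * Mb)" using dm Mb(1) L0 by (intro mult_left_mono mult_right_mono) auto
        finally show ?thesis by (simp add: mult_ac)
      qed
      show ?thesis using p1 p2 unfolding sp inner_add_right K_def by (simp add: algebra_simps)
    qed
    have "integral {t1..t2} (\<lambda>\<tau>. U \<tau> \<bullet> y) \<le> (- c * \<nu> * norm (A t2) + K * h) * (t2 - t1)"
      by (rule int_bound_ae[OF iy N t12 bnd])
    thus ?thesis using eqV eqI unfolding h_def by (simp add: power2_eq_square algebra_simps)
  qed
  show ?thesis using K0 main by blast
qed


lemma sqrt_lower:
  fixes X Y V :: real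
  assumes X: "X > 0" and Y: "Y \<ge> 0" and V: "X^2 - Y \<le> V" and V0: "V \<ge> 0"
  shows "X - Y / X \<le> sqrt V"
proof (cases "X - Y / X \<le> 0")
  case True then show ?thesis using V0 by (meson order_trans real_sqrt_ge_zero)
next
  case False
  hence "Y / X < X" by simp
  hence YX: "Y < X^2" using X by (simp add: divide_less_eq power2_eq_square)
  have "(X - Y / X)^2 = X^2 - 2*Y + (Y/X)^2" using X by (simp add: power2_eq_square field_simps)
  also have "(Y/X)^2 = Y * (Y / X^2)" using X by (simp add: power2_eq_square)
  also have "Y * (Y / X^2) \<le> Y * 1" using YX Y X by (intro mult_left_mono) (auto simp: divide_le_eq)
  finally have "(X - Y / X)^2 \<le> V" using V by simp
  hence "sqrt ((X - Y / X)^2) \<le> sqrt V" by (rule real_sqrt_le_mono)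
  thus ?thesis using False by simp
qed

lemma core:
  fixes M :: "real^'k^'k" and A U :: "real \<Rightarrow> real^'k"
  assumes symM: "symm M"
    and nu: "\<nu> > 0" and lo: "\<And>x. \<nu> * (x \<bullet> x) \<le> x \<bullet> (M *v x)"
    and hi: "\<And>x. x \<bullet> (M *v x) \<le> \<mu> * (x \<bullet> x)" and numu: "\<nu> \<le> \<mu>"
    and c: "c > 0" and N: "negligible N" and B: "B \<ge> 0"
    and int: "\<And>t1 t2 z. t0 \<le> t1 \<Longrightarrow> t1 \<le> t2 \<Longrightarrow> (\<lambda>\<tau>. U \<tau> $ z) integrable_on {t1..t2} \<and>
                 A t2 $ z - A t1 $ z = integral {t1..t2} (\<lambda>\<tau>. U \<tau> $ z)"
    and Ub: "\<And>\<tau> z. \<tau> \<ge> t0 \<Longrightarrow> \<tau> \<notin> N \<Longrightarrow> \<bar>U \<tau> $ z\<bar> \<le> B"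
    and Ud: "\<And>\<tau>. \<tau> \<ge> t0 \<Longrightarrow> \<tau> \<notin> N \<Longrightarrow> U \<tau> \<bullet> (M *v A \<tau>) \<le> - c * norm (M *v A \<tau>)"
    and T: "T \<ge> t0 + sqrt (2 * \<mu> * (1/2 * (A t0 \<bullet> (M *v A t0)))) / (\<nu> * c)"
  shows "A T = 0"
proof (rule ccontr)
  assume AT: "A T \<noteq> 0"
  obtain K where K0: "K \<ge> 0" and loc: "\<And>t1 t2. t0 \<le> t1 \<Longrightarrow> t1 \<le> t2 \<Longrightarrow>
           1/2 * (A t2 \<bullet> (M *v A t2)) - 1/2 * (A t1 \<bullet> (M *v A t1))
             \<le> - c * \<nu> * (t2 - t1) * norm (A t2) + K * (t2 - t1)^2"
    using core_local[OF symM nu lo c N B int Ub Ud] by blast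
  define V where "V t = 1/2 * (A t \<bullet> (M *v A t))" for t
  have mu: "\<mu> > 0" using nu numu by simp
  have Vlo: "\<nu> / 2 * (norm (A t))^2 \<le> V t" for t
    using lo[of "A t"] unfolding V_def by (simp add: power2_norm_eq_inner)
  have Vhi: "V t \<le> \<mu> / 2 * (norm (A t))^2" for t
    using hi[of "A t"] unfolding V_def by (simp add: power2_norm_eq_inner)
  have V0: "V t \<ge> 0" for t using Vlo[of t] nu by (smt (verit) zero_le_mult_iff zero_le_power2 divide_nonneg_pos)
  have mono: "V t \<le> V s" if "t0 \<le> s" "s \<le> t" for s t
  proof (rule telescope[OF that(2) K0])
    fix x y assume xy: "s \<le> x" "x \<le> y" "y \<le> t"
    have "V y - V x \<le> - c * \<nu> * (y - x) * norm (A y) + K * (y - x)^2"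
      unfolding V_def using loc[of x y] xy that by simp
    moreover have "c * \<nu> * (y - x) * norm (A y) \<ge> 0" using c nu xy by simp
    ultimately show "V y - V x \<le> K * (y - x)^2" by linarith
  qed
  define W where "W t = sqrt (V t)" for t
  define \<sigma> where "\<sigma> = W T"
  have T0: "t0 \<le> T"
  proof -
    have "2 * \<mu> * (1/2 * (A t0 \<bullet> (M *v A t0))) \<ge> 0" using V0[of t0] mu unfolding V_def by simp
    hence "sqrt (2 * \<mu> * (1/2 * (A t0 \<bullet> (M *v A t0)))) / (\<nu> * c) \<ge> 0" using nu c by simp
    thus ?thesis using T by linarith
  qed
  have VT: "V T > 0"
  proof -
    have "norm (A T) > 0" using AT by simp
    hence "\<nu> / 2 * (norm (A T))^2 > 0" using nu by simp
    thus ?thesis using Vlo[of T] by linarith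
  qed
  have sig: "\<sigma> > 0" unfolding \<sigma>_def W_def using VT by simp
  define k where "k = c * \<nu> / sqrt (2 * \<mu>)"
  have k0: "k > 0" unfolding k_def using c nu mu by simp
  define C2 where "C2 = (k^2 + K) / \<sigma>"
  have C20: "C2 \<ge> 0" unfolding C2_def using sig K0 by simp
  have Fstep: "(W y + k * y) - (W x + k * x) \<le> C2 * (y - x)^2" if xy: "t0 \<le> x" "x \<le> y" "y \<le> T" for x y
  proof -
    define h where "h = y - x"
    have h0: "h \<ge> 0" using xy unfolding h_def by simp
    have Wy: "W y \<ge> \<sigma>" unfolding \<sigma>_def W_def using mono[of y T] xy by (simp add: real_sqrt_le_mono)
    have Wy0: "W y \<ge> 0" unfolding W_def using V0[of y] by simp
    have WyV: "(W y)^2 = V y" unfolding W_def using V0[of y] by simp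
    have kA: "2 * k * W y \<le> c * \<nu> * norm (A y)"
    proof -
      have k2: "k^2 = (c * \<nu>)^2 / (2 * \<mu>)" unfolding k_def using mu by (simp add: power_divide)
      have "(2 * k * W y)^2 = 4 * k^2 * V y" by (simp add: power_mult_distrib WyV)
      also have "\<dots> = (c * \<nu>)^2 * (2 * V y / \<mu>)" unfolding k2 using mu by (simp add: field_simps)
      finally have "(2 * k * W y)^2 = (c * \<nu>)^2 * (2 * V y / \<mu>)" .
      also have "\<dots> \<le> (c * \<nu>)^2 * (norm (A y))^2"
      proof (intro mult_left_mono)
        have "V y \<le> (\<mu> * (norm (A y))^2) / 2" using Vhi[of y] by simp
        hence "2 * V y \<le> (norm (A y))^2 * \<mu>" by (simp add: mult.commute)
        thus "2 * V y / \<mu> \<le> (norm (A y))^2" using mu by (simp add: pos_divide_le_eq)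
      qed simp
      also have "\<dots> = (c * \<nu> * norm (A y))^2" by (rule power_mult_distrib[symmetric])
      finally have sq: "(2 * k * W y)^2 \<le> (c * \<nu> * norm (A y))^2" .
      have nn: "0 \<le> c * \<nu> * norm (A y)" using c nu by simp
      show ?thesis by (rule power2_le_imp_le[OF sq nn])
    qed
    have "V y - V x \<le> - c * \<nu> * h * norm (A y) + K * h^2"
      unfolding V_def h_def using loc[of x y] xy by simp
    hence "V x \<ge> V y + h * (c * \<nu> * norm (A y)) - K * h^2" by (simp add: algebra_simps)
    moreover have "h * (2 * k * W y) \<le> h * (c * \<nu> * norm (A y))" by (rule mult_left_mono[OF kA h0])
    moreover have "(W y + k * h)^2 - (k^2 + K) * h^2 = (W y)^2 + h * (2 * k * W y) - K * h^2"
      by (simp add: power2_eq_square algebra_simps)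
    ultimately have Vx: "(W y + k * h)^2 - (k^2 + K) * h^2 \<le> V x"
      using WyV by linarith
    define X where "X = W y + k * h"
    define Y where "Y = (k^2 + K) * h^2"
    have kh: "0 \<le> k * h" using k0 h0 by simp
    have X0: "X > 0" unfolding X_def using Wy sig kh by linarith
    have Y0: "Y \<ge> 0" unfolding Y_def using K0 by simp
    have Wx: "X - Y / X \<le> W x" unfolding W_def
      by (rule sqrt_lower[OF X0 Y0 _ V0]) (use Vx in \<open>simp add: X_def Y_def\<close>)
    have sX: "\<sigma> \<le> X" unfolding X_def using Wy kh by linarith
    have "Y / X \<le> Y / \<sigma>" by (rule divide_left_mono[OF sX Y0]) (use X0 sig in simp)
    hence "(W y + k * y) - (W x + k * x) \<le> Y / \<sigma>" using Wx unfolding X_def h_def by (simp add: algebra_simps)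
    moreover have "Y / \<sigma> = C2 * (y - x)^2" unfolding Y_def C2_def h_def by simp
    ultimately show ?thesis by linarith
  qed
  have "W T + k * T \<le> W t0 + k * t0"
    by (rule telescope[OF T0 C20, where f = "\<lambda>t. W t + k * t"]) (rule Fstep; simp)
  hence WT: "W T \<le> W t0 - k * (T - t0)" by (simp add: algebra_simps)
  have "k * (sqrt (2 * \<mu> * V t0) / (\<nu> * c)) = W t0"
  proof -
    have s: "sqrt (2 * \<mu>) > 0" using mu by simp
    have ks: "k * sqrt (2 * \<mu>) = c * \<nu>" unfolding k_def using s by simp
    have "k * (sqrt (2 * \<mu> * V t0) / (\<nu> * c)) = (k * sqrt (2 * \<mu>)) * W t0 / (\<nu> * c)"
      unfolding W_def by (simp add: real_sqrt_mult)
    also have "\<dots> = W t0" unfolding ks using c nu by simp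
    finally show ?thesis .
  qed
  moreover have "k * (sqrt (2 * \<mu> * V t0) / (\<nu> * c)) \<le> k * (T - t0)"
    using T k0 unfolding V_def by (intro mult_left_mono) auto
  ultimately have "W T \<le> 0" using WT by linarith
  thus False using sig unfolding \<sigma>_def by simp
qed


lemma SGN_facts: "\<sigma> \<in> SGN x \<Longrightarrow> \<bar>\<sigma>\<bar> \<le> 1 \<and> \<sigma> * x = \<bar>x\<bar>"
  unfolding SGN_def by (cases "x = 0") (auto simp: sgn_real_def)

theorem mainTheorem3:
  fixes w :: "'n::finite \<Rightarrow> 'n \<Rightarrow> real"
    and p :: "'n \<Rightarrow> real"
    and a0 a0' :: "real \<Rightarrow> real^'m::finite"
    and a :: "'n \<Rightarrow> real \<Rightarrow> real^'m"
    and \<beta> t0 :: real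
  assumes w_sym: "\<And>i j. w i j = w j i"
    and w_nonneg: "\<And>i j. w i j \<ge> 0"
    and w_diag: "\<And>i. w i i = 0"
    and p_nonneg: "\<And>i. p i \<ge> 0"
    and a0_deriv: "\<And>t. t \<ge> t0 \<Longrightarrow> (a0 has_vector_derivative a0' t) (at t within {t0..})"
    and a0'_cont: "continuous_on {t0..} a0'"
    and A1: "leader_reaches_all w p"
    and beta_pos: "\<beta> > 0"
    and A2_bdd: "bdd_above ((\<lambda>t. norm (a0' t)) ` {t0..})"
    and A2: "(SUP t\<in>{t0..}. norm (a0' t)) < \<beta>"
    and sol: "is_estimator_solution w p \<beta> t0 a0 a"
  shows "\<forall>t \<ge> t0 + sqrt (2 * lambda_max (Mmat w p :: real^('n \<times> 'm)^('n \<times> 'm)) * Vfun w p a a0 t0)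
                    / (lambda_min (Mmat w p :: real^('n \<times> 'm)^('n \<times> 'm))
                       * (\<beta> - (SUP t\<in>{t0..}. norm (a0' t)))).
           \<forall>i. a i t = a0 t"
proof (intro allI impI)
  fix T i
  assume T: "T \<ge> t0 + sqrt (2 * lambda_max (Mmat w p :: real^('n \<times> 'm)^('n \<times> 'm)) * Vfun w p a a0 t0)
                    / (lambda_min (Mmat w p :: real^('n \<times> 'm)^('n \<times> 'm))
                       * (\<beta> - (SUP t\<in>{t0..}. norm (a0' t))))"
  define M where "M = (Mmat w p :: real^('n \<times> 'm)^('n \<times> 'm))"
  define S where "S = (SUP t\<in>{t0..}. norm (a0' t))"
  define c where "c = \<beta> - S"
  have symM: "symm M" unfolding M_def by (rule Mmat_symm[where w=w, OF w_sym])
  note lf = lambda_facts[OF symM]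
  have nu: "lambda_min M > 0"
  proof -
    obtain x0 :: "real^('n\<times>'m)" where x0: "norm x0 = 1" "x0 \<bullet> (M *v x0) = lambda_min M" using lf(3) by blast
    have "x0 \<noteq> 0" using x0 by auto
    hence "x0 \<bullet> (M *v x0) > 0" unfolding M_def
      by (rule Mmat_pd[where w=w and p=p, OF w_diag w_sym w_nonneg p_nonneg A1])
    thus ?thesis using x0 by simp
  qed
  have Sup: "norm (a0' t) \<le> S" if "t \<ge> t0" for t
    unfolding S_def using that A2_bdd by (intro cSUP_upper) auto
  have S0: "S \<ge> 0" using Sup[of t0] norm_ge_zero[of "a0' t0"] by linarith
  have c: "c > 0" unfolding c_def S_def using A2 by simp
  obtain v :: "'n \<Rightarrow> real \<Rightarrow> real^'m" and N where N: "negligible N"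
    and vint': "\<forall>i t. t \<ge> t0 \<longrightarrow> v i integrable_on {t0..t} \<and> a i t = a i t0 + integral {t0..t} (v i)"
    and vinc': "\<forall>t \<in> {t0..} - N. \<forall>i k.
           v i t $ k \<in> (\<lambda>s. - \<beta> * s) ` SGN (est_arg w p (\<lambda>j. a j t) (a0 t) i $ k)"
    using sol unfolding is_estimator_solution_def by (elim exE conjE)
  have vint: "v i integrable_on {t0..t}" "a i t = a i t0 + integral {t0..t} (v i)" if "t \<ge> t0" for i t
    using vint' that by blast+
  have vinc: "v i t $ k \<in> (\<lambda>s. - \<beta> * s) ` SGN (est_arg w p (\<lambda>j. a j t) (a0 t) i $ k)"
    if "t \<ge> t0" "t \<notin> N" for t i k
    using vinc' that by blast
  define A where "A = abar a a0"
  define U where "U \<tau> = (\<chi> z. v (fst z) \<tau> $ snd z - a0' \<tau> $ snd z)" for \<tau>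
  have "A T = 0"
  proof (rule core[where M=M and \<nu>="lambda_min M" and \<mu>="lambda_max M" and c=c and N=N and B="\<beta> + S"
            and U=U and A=A])
    show "symm M" by (rule symM)
    show "lambda_min M > 0" by (rule nu)
    show "\<And>x. lambda_min M * (x \<bullet> x) \<le> x \<bullet> (M *v x)" by (rule lf(1))
    show "\<And>x. x \<bullet> (M *v x) \<le> lambda_max M * (x \<bullet> x)" by (rule lf(2))
    show "lambda_min M \<le> lambda_max M" by (rule lf(4))
    show "c > 0" by (rule c)
    show "negligible N" by (rule N)
    show "\<beta> + S \<ge> 0" using beta_pos S0 by simp
    show "T \<ge> t0 + sqrt (2 * lambda_max M * (1/2 * (A t0 \<bullet> (M *v A t0)))) / (lambda_min M * c)"
      using T unfolding M_def A_def c_def S_def Vfun_def by simp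
    show "(\<lambda>\<tau>. U \<tau> $ z) integrable_on {t1..t2} \<and> A t2 $ z - A t1 $ z = integral {t1..t2} (\<lambda>\<tau>. U \<tau> $ z)"
      if t1: "t0 \<le> t1" and t12: "t1 \<le> t2" for t1 t2 z
    proof -
      obtain i k where z: "z = (i, k)" by (cases z)
      have t02: "t0 \<le> t2" using t1 t12 by simp
      have vi2: "v i integrable_on {t0..t2}" using vint(1)[OF t02] .
      have vi: "v i integrable_on {t1..t2}" by (rule integrable_on_subinterval[OF vi2]) (use t1 in auto)
      have ac: "continuous_on {t1..t2} a0'" using a0'_cont by (rule continuous_on_subset) (use t1 in auto)
      have ai: "a0' integrable_on {t1..t2}" by (rule integrable_continuous_interval[OF ac])
      have ftc: "(a0' has_integral (a0 t2 - a0 t1)) {t1..t2}"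
      proof (rule fundamental_theorem_of_calculus[OF t12])
        fix x assume x: "x \<in> {t1..t2}"
        have "(a0 has_vector_derivative a0' x) (at x within {t0..})" using x t1 by (intro a0_deriv) auto
        thus "(a0 has_vector_derivative a0' x) (at x within {t1..t2})"
          by (rule has_vector_derivative_within_subset) (use t1 in auto)
      qed
      have comb: "integral {t0..t1} (v i) + integral {t1..t2} (v i) = integral {t0..t2} (v i)"
        by (rule Henstock_Kurzweil_Integration.integral_combine[OF t1 t12 vi2])
      have e2: "a i t2 = a i t0 + integral {t0..t2} (v i)" by (rule vint(2)[OF t02])
      have e1: "a i t1 = a i t0 + integral {t0..t1} (v i)" by (rule vint(2)[OF t1])
      have ae: "a i t2 - a i t1 = integral {t1..t2} (v i)" using e1 e2 comb
        by (metis (no_types, lifting) add_diff_cancel_left' add.assoc)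
      have a0e: "a0 t2 - a0 t1 = integral {t1..t2} a0'" using ftc by (rule integral_unique[symmetric])
      have Uz: "(\<lambda>\<tau>. U \<tau> $ z) = (\<lambda>\<tau>. (v i \<tau> - a0' \<tau>) $ k)" unfolding U_def z by simp
      have di: "(\<lambda>\<tau>. v i \<tau> - a0' \<tau>) integrable_on {t1..t2}" by (rule integrable_diff[OF vi ai])
      have dik: "(\<lambda>\<tau>. (v i \<tau> - a0' \<tau>) $ k) integrable_on {t1..t2}"
        using integrable_linear[OF di bounded_linear_vec_nth[of k]] by (simp add: o_def)
      have "A t2 $ z - A t1 $ z = ((a i t2 - a i t1) - (a0 t2 - a0 t1)) $ k"
        unfolding A_def abar_def z by simp
      also have "\<dots> = integral {t1..t2} (\<lambda>\<tau>. (v i \<tau> - a0' \<tau>) $ k)"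
        unfolding ae a0e integral_component_eq_cart[OF di] integral_diff[OF vi ai] ..
      finally show ?thesis using dik unfolding Uz by simp
    qed
    show "\<bar>U \<tau> $ z\<bar> \<le> \<beta> + S" if \<tau>: "\<tau> \<ge> t0" "\<tau> \<notin> N" for \<tau> z
    proof -
      obtain \<sigma> where \<sigma>: "\<sigma> \<in> SGN (est_arg w p (\<lambda>j. a j \<tau>) (a0 \<tau>) (fst z) $ snd z)"
        and ve: "v (fst z) \<tau> $ snd z = - \<beta> * \<sigma>"
        using vinc[OF \<tau>, of "fst z" "snd z"] by blast
      have "\<bar>\<sigma>\<bar> \<le> 1" using SGN_facts[OF \<sigma>] by simp
      hence "\<bar>v (fst z) \<tau> $ snd z\<bar> \<le> \<beta>" unfolding ve using beta_pos by (simp add: abs_mult)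
      moreover have "\<bar>a0' \<tau> $ snd z\<bar> \<le> S" using component_le_norm_cart[of "a0' \<tau>" "snd z"] Sup[OF \<tau>(1)] by linarith
      ultimately show ?thesis unfolding U_def by simp
    qed
    show "U \<tau> \<bullet> (M *v A \<tau>) \<le> - c * norm (M *v A \<tau>)" if \<tau>: "\<tau> \<ge> t0" "\<tau> \<notin> N" for \<tau>
    proof -
      define s where "s = M *v A \<tau>"
      have comp: "U \<tau> $ z * s $ z \<le> - c * \<bar>s $ z\<bar>" for z
      proof -
        obtain i k where z: "z = (i, k)" by (cases z)
        have sz: "s $ z = est_arg w p (\<lambda>j. a j \<tau>) (a0 \<tau>) i $ k"
          unfolding s_def M_def A_def z by (rule est_arg_eq[OF w_diag w_nonneg])
        obtain \<sigma> where \<sigma>: "\<sigma> \<in> SGN (s $ z)" and ve: "v i \<tau> $ k = - \<beta> * \<sigma>"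
          using vinc[OF \<tau>, of i k] unfolding sz by blast
        have e1: "v i \<tau> $ k * s $ z = - \<beta> * \<bar>s $ z\<bar>" using SGN_facts[OF \<sigma>] unfolding ve by simp
        have "- (a0' \<tau> $ k * s $ z) \<le> \<bar>a0' \<tau> $ k\<bar> * \<bar>s $ z\<bar>" by (simp add: abs_mult[symmetric])
        also have "\<dots> \<le> S * \<bar>s $ z\<bar>"
          using component_le_norm_cart[of "a0' \<tau>" k] Sup[OF \<tau>(1)] by (intro mult_right_mono) auto
        finally have e2: "- (a0' \<tau> $ k * s $ z) \<le> S * \<bar>s $ z\<bar>" .
        have "U \<tau> $ z * s $ z = v i \<tau> $ k * s $ z - a0' \<tau> $ k * s $ z" unfolding U_def z by (simp add: left_diff_distrib)
        thus ?thesis using e1 e2 unfolding c_def by (simp add: left_diff_distrib)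
      qed
      have "U \<tau> \<bullet> s = (\<Sum>z\<in>UNIV. U \<tau> $ z * s $ z)" by (simp add: inner_vec_def inner_real_def)
      also have "\<dots> \<le> (\<Sum>z\<in>UNIV. - c * \<bar>s $ z\<bar>)" by (intro sum_mono comp)
      also have "\<dots> = - c * (\<Sum>z\<in>UNIV. \<bar>s $ z\<bar>)" by (simp add: sum_distrib_left)
      also have "\<dots> \<le> - c * norm s" using norm_le_l1_cart[of s] c by simp
      finally show ?thesis unfolding s_def .
    qed
  qed
  hence "(a i T - a0 T) $ k = 0" for k unfolding A_def abar_def by (simp add: vec_eq_iff)
  thus "a i T = a0 T" by (simp add: vec_eq_iff)
qed

end
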